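(* For every formula $\varphi$ (in the syntax described in the context) there exists a formula $\varphi'$ in normal form such that $\varphi' \equiv \varphi$ and $|\varphi'| \leq 4^{7|\varphi|}$.
   Context: Fix a finite set $Ap$ of atomic propositions. A word is an infinite sequence $w = w[0]w[1]w[2]\dots$ of letters of $\Sigma = 2^{Ap}$, and $w_i$ denotes the suffix $w[i]w[i+1]\dots$. Formulas are generated by the grammar $\varphi ::= \mathbf{true} \mid \mathbf{false} \mid a \mid \neg a \mid \varphi\wedge\varphi \mid \varphi\vee\varphi \mid \mathbf{X}\varphi \mid \varphi\,\mathbf{U}\,\varphi \mid \varphi\,\mathbf{W}\,\varphi \mid \mathbf{GF}\varphi \mid \mathbf{FG}\varphi$ with $a \in Ap$, where $\mathbf{GF}$ and $\mathbf{FG}$ are single unary operators (the limit operators). Semantics: $w\models\mathbf{true}$ always, $w\not\models\mathbf{false}$; $w\models a$ iff $a\in w[0]$; $w\models\neg a$ iff $a\notin w[0]$; $\wedge,\vee$ as usual; $w\models\mathbf{X}\varphi$ iff $w_1\models\varphi$; $w\models\varphi\mathbf{U}\psi$ iff there is $k$ with $w_k\models\psi$ and $w_j\models\varphi$ for all $j<k$; $w\models\varphi\mathbf{W}\psi$ iff $w_k\models\varphi$ for all $k$ or $w\models\varphi\mathbf{U}\psi$; $w\models\mathbf{GF}\varphi$ iff $w_k\models\varphi$ for infinitely many $k$; $w\models\mathbf{FG}\varphi$ iff there is $n$ with $w_k\models\varphi$ for all $k\geq n$. Two formulas are equivalent ($\equiv$) if they are satisfied by exactly the same words. The syntax tree $T_\varphi$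 has leaves $\mathbf{true},\mathbf{false},a,\neg a$ and one internal node per operator occurrence with its operands as children; $|\varphi|$ is the number of nodes of $T_\varphi$. A node whose subformula has top operator $\mathbf{U}$ (resp. $\mathbf{W}$, $\mathbf{X}$, $\mathbf{GF}$, $\mathbf{FG}$) is a $\mathbf{U}$-node (resp. $\mathbf{W}$-, $\mathbf{X}$-, $\mathbf{GF}$-, $\mathbf{FG}$-node); $\mathbf{GF}$- and $\mathbf{FG}$-nodes are limit nodes; $\mathbf{U}$-, $\mathbf{W}$-, $\mathbf{X}$-, $\mathbf{GF}$-, $\mathbf{FG}$-nodes are temporal nodes. A node is under another node if it is a proper descendant of it in $T_\varphi$. A formula is in normal form if (1) no $\mathbf{U}$-node is under a $\mathbf{W}$-node; (2) no limit node is under another temporal node; (3) no $\mathbf{W}$-node is under a $\mathbf{GF}$-node and no $\mathbf{U}$-node is under an $\mathbf{FG}$-node. *)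

theory Defs
  imports Main
begin

datatype 'a ltl =
    True_ltl
  | False_ltl
  | Prop 'a
  | NProp 'a
  | And_ltl "'a ltl" "'a ltl"
  | Or_ltl "'a ltl" "'a ltl"
  | Next_ltl "'a ltl"
  | Until_ltl "'a ltl" "'a ltl"
  | WeakUntil_ltl "'a ltl" "'a ltl"
  | GF_ltl "'a ltl"
  | FG_ltl "'a ltl"

type_synonym 'a word = "nat \<Rightarrow> 'a set"

definition suffix_w :: "nat \<Rightarrow> 'a word \<Rightarrow> 'a word" where
  "suffix_w i w = (\<lambda>k. w (i + k))"

fun models :: "'a word \<Rightarrow> 'a ltl \<Rightarrow> bool" where
  "models w True_ltl = True"
| "models w False_ltl = False"
| "models w (Prop a) = (a \<in> w 0)"
| "models w (NProp a) = (a \<notin> w 0)"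
| "models w (And_ltl \<phi> \<psi>) = (models w \<phi> \<and> models w \<psi>)"
| "models w (Or_ltl \<phi> \<psi>) = (models w \<phi> \<or> models w \<psi>)"
| "models w (Next_ltl \<phi>) = models (suffix_w 1 w) \<phi>"
| "models w (Until_ltl \<phi> \<psi>) =
     (\<exists>k. models (suffix_w k w) \<psi> \<and> (\<forall>j<k. models (suffix_w j w) \<phi>))"
| "models w (WeakUntil_ltl \<phi> \<psi>) =
     ((\<forall>k. models (suffix_w k w) \<phi>) \<or>
      (\<exists>k. models (suffix_w k w) \<psi> \<and> (\<forall>j<k. models (suffix_w j w) \<phi>)))"
| "models w (GF_ltl \<phi>) = (\<exists>\<^sub>\<infinity>k. models (suffix_w k w) \<phi>)"
| "models w (FG_ltl \<phi>) = (\<exists>n. \<forall>k\<ge>n. models (suffix_w k w) \<phi>)"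

definition equiv_ltl :: "'a set \<Rightarrow> 'a ltl \<Rightarrow> 'a ltl \<Rightarrow> bool" where
  "equiv_ltl Ap \<phi> \<psi> = (\<forall>w. (\<forall>i. w i \<subseteq> Ap) \<longrightarrow> (models w \<phi> \<longleftrightarrow> models w \<psi>))"

fun atoms :: "'a ltl \<Rightarrow> 'a set" where
  "atoms True_ltl = {}"
| "atoms False_ltl = {}"
| "atoms (Prop a) = {a}"
| "atoms (NProp a) = {a}"
| "atoms (And_ltl \<phi> \<psi>) = atoms \<phi> \<union> atoms \<psi>"
| "atoms (Or_ltl \<phi> \<psi>) = atoms \<phi> \<union> atoms \<psi>"
| "atoms (Next_ltl \<phi>) = atoms \<phi>"
| "atoms (Until_ltl \<phi> \<psi>) = atoms \<phi> \<union> atoms \<psi>"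
| "atoms (WeakUntil_ltl \<phi> \<psi>) = atoms \<phi> \<union> atoms \<psi>"
| "atoms (GF_ltl \<phi>) = atoms \<phi>"
| "atoms (FG_ltl \<phi>) = atoms \<phi>"

fun fsize :: "'a ltl \<Rightarrow> nat" where
  "fsize True_ltl = 1"
| "fsize False_ltl = 1"
| "fsize (Prop a) = 1"
| "fsize (NProp a) = 1"
| "fsize (And_ltl \<phi> \<psi>) = 1 + fsize \<phi> + fsize \<psi>"
| "fsize (Or_ltl \<phi> \<psi>) = 1 + fsize \<phi> + fsize \<psi>"
| "fsize (Next_ltl \<phi>) = 1 + fsize \<phi>"
| "fsize (Until_ltl \<phi> \<psi>) = 1 + fsize \<phi> + fsize \<psi>"
| "fsize (WeakUntil_ltl \<phi> \<psi>) = 1 + fsize \<phi> + fsize \<psi>"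
| "fsize (GF_ltl \<phi>) = 1 + fsize \<phi>"
| "fsize (FG_ltl \<phi>) = 1 + fsize \<phi>"

fun subfs :: "'a ltl \<Rightarrow> 'a ltl set" where
  "subfs True_ltl = {True_ltl}"
| "subfs False_ltl = {False_ltl}"
| "subfs (Prop a) = {Prop a}"
| "subfs (NProp a) = {NProp a}"
| "subfs (And_ltl \<phi> \<psi>) = insert (And_ltl \<phi> \<psi>) (subfs \<phi> \<union> subfs \<psi>)"
| "subfs (Or_ltl \<phi> \<psi>) = insert (Or_ltl \<phi> \<psi>) (subfs \<phi> \<union> subfs \<psi>)"
| "subfs (Next_ltl \<phi>) = insert (Next_ltl \<phi>) (subfs \<phi>)"
| "subfs (Until_ltl \<phi> \<psi>) = insert (Until_ltl \<phi> \<psi>) (subfs \<phi> \<union> subfs \<psi>)"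
| "subfs (WeakUntil_ltl \<phi> \<psi>) = insert (WeakUntil_ltl \<phi> \<psi>) (subfs \<phi> \<union> subfs \<psi>)"
| "subfs (GF_ltl \<phi>) = insert (GF_ltl \<phi>) (subfs \<phi>)"
| "subfs (FG_ltl \<phi>) = insert (FG_ltl \<phi>) (subfs \<phi>)"

fun children :: "'a ltl \<Rightarrow> 'a ltl list" where
  "children (And_ltl \<phi> \<psi>) = [\<phi>, \<psi>]"
| "children (Or_ltl \<phi> \<psi>) = [\<phi>, \<psi>]"
| "children (Next_ltl \<phi>) = [\<phi>]"
| "children (Until_ltl \<phi> \<psi>) = [\<phi>, \<psi>]"
| "children (WeakUntil_ltl \<phi> \<psi>) = [\<phi>, \<psi>]"
| "children (GF_ltl \<phi>) = [\<phi>]"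
| "children (FG_ltl \<phi>) = [\<phi>]"
| "children _ = []"

definition proper_subfs :: "'a ltl \<Rightarrow> 'a ltl set" where
  "proper_subfs \<phi> = (\<Union>c\<in>set (children \<phi>). subfs c)"

fun is_U :: "'a ltl \<Rightarrow> bool" where
  "is_U (Until_ltl _ _) = True" | "is_U _ = False"
fun is_W :: "'a ltl \<Rightarrow> bool" where
  "is_W (WeakUntil_ltl _ _) = True" | "is_W _ = False"
fun is_X :: "'a ltl \<Rightarrow> bool" where
  "is_X (Next_ltl _) = True" | "is_X _ = False"
fun is_GF :: "'a ltl \<Rightarrow> bool" where
  "is_GF (GF_ltl _) = True" | "is_GF _ = False"
fun is_FG :: "'a ltl \<Rightarrow> bool" where
  "is_FG (FG_ltl _) = True" | "is_FG _ = False"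

definition is_limit :: "'a ltl \<Rightarrow> bool" where
  "is_limit \<phi> = (is_GF \<phi> \<or> is_FG \<phi>)"
definition is_temporal :: "'a ltl \<Rightarrow> bool" where
  "is_temporal \<phi> = (is_U \<phi> \<or> is_W \<phi> \<or> is_X \<phi> \<or> is_GF \<phi> \<or> is_FG \<phi>)"

definition under :: "('a ltl \<Rightarrow> bool) \<Rightarrow> ('a ltl \<Rightarrow> bool) \<Rightarrow> 'a ltl \<Rightarrow> bool" where
  "under Q P \<phi> = (\<exists>\<psi>\<in>subfs \<phi>. P \<psi> \<and> (\<exists>\<chi>\<in>proper_subfs \<psi>. Q \<chi>))"

definition normal_form :: "'a ltl \<Rightarrow> bool" where
  "normal_form \<phi> =
    (\<not> under is_U is_W \<phi> \<and>
     \<not> under is_limit is_temporal \<phi> \<and>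
     \<not> under is_W is_GF \<phi> \<and> \<not> under is_U is_FG \<phi>)"

end

theory Submission
  imports Defs "HOL-Library.Infinite_Set"
begin


definition sat :: "'a word \<Rightarrow> nat \<Rightarrow> 'a ltl \<Rightarrow> bool" where
  "sat w i \<phi> = models (suffix_w i w) \<phi>"

definition infw :: "'a word \<Rightarrow> 'a ltl \<Rightarrow> bool" where
  "infw w \<phi> = (\<forall>m. \<exists>k\<ge>m. sat w k \<phi>)"

definition fg :: "'a word \<Rightarrow> 'a ltl \<Rightarrow> bool" where
  "fg w \<phi> = (\<exists>n. \<forall>k\<ge>n. sat w k \<phi>)"

lemma suffix_suffix[simp]: "suffix_w k (suffix_w i w) = suffix_w (i + k) w"
  by (auto simp: suffix_w_def add.assoc)

lemma suffix_0[simp]: "suffix_w 0 w = w"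
  by (auto simp: suffix_w_def)

lemma sat_0: "sat w 0 \<phi> = models w \<phi>"
  by (simp add: sat_def)

lemma until_shift:
  fixes i :: nat
  shows
  "(\<exists>k. P (i + k) \<and> (\<forall>j<k. Q (i + j))) = (\<exists>k\<ge>i. P k \<and> (\<forall>j. i \<le> j \<and> j < k \<longrightarrow> Q j))"
proof
  assume "\<exists>k. P (i + k) \<and> (\<forall>j<k. Q (i + j))"
  then obtain k where "P (i + k)" "\<forall>j<k. Q (i + j)" by blast
  then show "\<exists>k\<ge>i. P k \<and> (\<forall>j. i \<le> j \<and> j < k \<longrightarrow> Q j)"
  proof (intro exI[of _ "i+k"] conjI allI impI)
    fix j assume "i \<le> j \<and> j < i + k"
    then have "j = i + (j - i)" "j - i < k" by auto
    then show "Q j" using \<open>\<forall>j<k. Q (i + j)\<close> by metis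
  qed auto
next
  assume "\<exists>k\<ge>i. P k \<and> (\<forall>j. i \<le> j \<and> j < k \<longrightarrow> Q j)"
  then obtain k where "k \<ge> i" "P k" "\<forall>j. i \<le> j \<and> j < k \<longrightarrow> Q j" by blast
  then show "\<exists>k. P (i + k) \<and> (\<forall>j<k. Q (i + j))"
    by (intro exI[of _ "k-i"]) auto
qed

lemma sat_simps[simp]:
  "sat w i True_ltl"
  "\<not> sat w i False_ltl"
  "sat w i (Prop a) = (a \<in> w i)"
  "sat w i (NProp a) = (a \<notin> w i)"
  "sat w i (And_ltl \<phi> \<psi>) = (sat w i \<phi> \<and> sat w i \<psi>)"
  "sat w i (Or_ltl \<phi> \<psi>) = (sat w i \<phi> \<or> sat w i \<psi>)"
  "sat w i (Next_ltl \<phi>) = sat w (Suc i) \<phi>"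
  "sat w i (Until_ltl \<phi> \<psi>) = (\<exists>k\<ge>i. sat w k \<psi> \<and> (\<forall>j. i \<le> j \<and> j < k \<longrightarrow> sat w j \<phi>))"
  "sat w i (WeakUntil_ltl \<phi> \<psi>) = ((\<forall>k\<ge>i. sat w k \<phi>) \<or>
      (\<exists>k\<ge>i. sat w k \<psi> \<and> (\<forall>j. i \<le> j \<and> j < k \<longrightarrow> sat w j \<phi>)))"
  "sat w i (GF_ltl \<phi>) = infw w \<phi>"
  "sat w i (FG_ltl \<phi>) = fg w \<phi>"
proof -
  show "sat w i (Until_ltl \<phi> \<psi>) = (\<exists>k\<ge>i. sat w k \<psi> \<and> (\<forall>j. i \<le> j \<and> j < k \<longrightarrow> sat w j \<phi>))"
    using until_shift[of "\<lambda>k. sat w k \<psi>" i "\<lambda>k. sat w k \<phi>"] by (simp add: sat_def)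
  have all: "(\<forall>k. sat w (i+k) \<phi>) = (\<forall>k\<ge>i. sat w k \<phi>)"
  proof
    assume "\<forall>k. sat w (i+k) \<phi>"
    then show "\<forall>k\<ge>i. sat w k \<phi>" by (metis le_add_diff_inverse)
  qed simp
  show "sat w i (WeakUntil_ltl \<phi> \<psi>) = ((\<forall>k\<ge>i. sat w k \<phi>) \<or>
      (\<exists>k\<ge>i. sat w k \<psi> \<and> (\<forall>j. i \<le> j \<and> j < k \<longrightarrow> sat w j \<phi>)))"
    using until_shift[of "\<lambda>k. sat w k \<psi>" i "\<lambda>k. sat w k \<phi>"] all by (simp add: sat_def)
  show "sat w i (GF_ltl \<phi>) = infw w \<phi>"
  proof
    assume "sat w i (GF_ltl \<phi>)"
    then have h: "\<forall>m. \<exists>n\<ge>m. sat w (i+n) \<phi>" by (simp add: sat_def INFM_nat_le)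
    show "infw w \<phi>" unfolding infw_def
    proof
      fix m obtain n where "n \<ge> m" "sat w (i+n) \<phi>" using h by blast
      then show "\<exists>k\<ge>m. sat w k \<phi>" by (intro exI[of _ "i+n"]) auto
    qed
  next
    assume "infw w \<phi>"
    then have h: "\<forall>m. \<exists>k\<ge>m. sat w k \<phi>" by (simp add: infw_def)
    have "\<forall>m. \<exists>n\<ge>m. sat w (i+n) \<phi>"
    proof
      fix m obtain k where "k \<ge> i + m" "sat w k \<phi>" using h by blast
      then show "\<exists>n\<ge>m. sat w (i+n) \<phi>" by (intro exI[of _ "k-i"]) auto
    qed
    then show "sat w i (GF_ltl \<phi>)" by (simp add: sat_def INFM_nat_le)
  qed
  show "sat w i (FG_ltl \<phi>) = fg w \<phi>"
  proof
    assume "sat w i (FG_ltl \<phi>)"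
    then obtain n where h: "\<forall>k\<ge>n. sat w (i+k) \<phi>" by (auto simp: sat_def)
    show "fg w \<phi>" unfolding fg_def
    proof (intro exI[of _ "i+n"] allI impI)
      fix k assume "k \<ge> i + n"
      then show "sat w k \<phi>" using h[rule_format, of "k-i"] by auto
    qed
  next
    assume "fg w \<phi>"
    then obtain n where h: "\<forall>k\<ge>n. sat w k \<phi>" by (auto simp: fg_def)
    then have "\<forall>k\<ge>n. sat w (i+k) \<phi>" by auto
    then show "sat w i (FG_ltl \<phi>)" by (auto simp: sat_def)
  qed
qed (auto simp: sat_def suffix_w_def)

fun lfree :: "'a ltl \<Rightarrow> 'a ltl" where
  "lfree (GF_ltl \<phi>) = WeakUntil_ltl (Until_ltl True_ltl (lfree \<phi>)) False_ltl"
| "lfree (FG_ltl \<phi>) = Until_ltl True_ltl (WeakUntil_ltl (lfree \<phi>) False_ltl)"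
| "lfree (And_ltl \<phi> \<psi>) = And_ltl (lfree \<phi>) (lfree \<psi>)"
| "lfree (Or_ltl \<phi> \<psi>) = Or_ltl (lfree \<phi>) (lfree \<psi>)"
| "lfree (Next_ltl \<phi>) = Next_ltl (lfree \<phi>)"
| "lfree (Until_ltl \<phi> \<psi>) = Until_ltl (lfree \<phi>) (lfree \<psi>)"
| "lfree (WeakUntil_ltl \<phi> \<psi>) = WeakUntil_ltl (lfree \<phi>) (lfree \<psi>)"
| "lfree \<phi> = \<phi>"

lemma sat_lfree: "sat w i (lfree \<phi>) = sat w i \<phi>"
proof (induction \<phi> arbitrary: i)
  case (GF_ltl \<phi>)
  have "(\<forall>k\<ge>i. \<exists>k'\<ge>k. sat w k' \<phi>) = (\<forall>m. \<exists>k\<ge>m. sat w k \<phi>)"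
  proof
    assume h: "\<forall>k\<ge>i. \<exists>k'\<ge>k. sat w k' \<phi>"
    show "\<forall>m. \<exists>k\<ge>m. sat w k \<phi>"
    proof
      fix m obtain k' where "k' \<ge> max i m" "sat w k' \<phi>" using h by (meson max.cobounded1)
      then show "\<exists>k\<ge>m. sat w k \<phi>" by auto
    qed
  qed auto
  then show ?case by (simp add: GF_ltl infw_def)
next
  case (FG_ltl \<phi>)
  have "(\<exists>k\<ge>i. \<forall>k'\<ge>k. sat w k' \<phi>) = (\<exists>n. \<forall>k\<ge>n. sat w k \<phi>)"
  proof
    assume "\<exists>n. \<forall>k\<ge>n. sat w k \<phi>"
    then obtain n where "\<forall>k\<ge>n. sat w k \<phi>" by blast
    then show "\<exists>k\<ge>i. \<forall>k'\<ge>k. sat w k' \<phi>" by (intro exI[of _ "max i n"]) auto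
  qed auto
  then show ?case by (simp add: FG_ltl fg_def)
qed auto

fun lf :: "'a ltl \<Rightarrow> bool" where
  "lf (GF_ltl \<phi>) = False"
| "lf (FG_ltl \<phi>) = False"
| "lf (And_ltl \<phi> \<psi>) = (lf \<phi> \<and> lf \<psi>)"
| "lf (Or_ltl \<phi> \<psi>) = (lf \<phi> \<and> lf \<psi>)"
| "lf (Next_ltl \<phi>) = lf \<phi>"
| "lf (Until_ltl \<phi> \<psi>) = (lf \<phi> \<and> lf \<psi>)"
| "lf (WeakUntil_ltl \<phi> \<psi>) = (lf \<phi> \<and> lf \<psi>)"
| "lf \<phi> = True"

lemma lf_lfree: "lf (lfree \<phi>)"
  by (induction \<phi>) auto

lemma atoms_lfree: "atoms (lfree \<phi>) = atoms \<phi>"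
  by (induction \<phi>) auto

lemma fsize_lfree: "fsize (lfree \<phi>) \<le> 4 * fsize \<phi>"
  by (induction \<phi>) auto

lemma fsize_pos: "fsize \<phi> \<ge> 1"
  by (cases \<phi>) auto

lemma subfs_refl: "\<phi> \<in> subfs \<phi>"
  by (cases \<phi>) auto

lemma subfs_trans: "\<psi> \<in> subfs \<phi> \<Longrightarrow> \<chi> \<in> subfs \<psi> \<Longrightarrow> \<chi> \<in> subfs \<phi>"
  by (induction \<phi>) auto

lemma subfs_size: "\<psi> \<in> subfs \<phi> \<Longrightarrow> \<psi> = \<phi> \<or> fsize \<psi> < fsize \<phi>"
  by (induction \<phi>) auto

lemma subfs_lf: "\<psi> \<in> subfs \<phi> \<Longrightarrow> lf \<phi> \<Longrightarrow> lf \<psi>"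
  by (induction \<phi>) auto

lemma subfs_atoms: "\<psi> \<in> subfs \<phi> \<Longrightarrow> atoms \<psi> \<subseteq> atoms \<phi>"
  by (induction \<phi>) auto



fun p1 :: "'a ltl set \<Rightarrow> 'a ltl \<Rightarrow> 'a ltl" where
  "p1 A (Until_ltl a b) = (if Until_ltl a b \<in> A then WeakUntil_ltl (p1 A a) (p1 A b) else False_ltl)"
| "p1 A (WeakUntil_ltl a b) = WeakUntil_ltl (p1 A a) (p1 A b)"
| "p1 A (And_ltl a b) = And_ltl (p1 A a) (p1 A b)"
| "p1 A (Or_ltl a b) = Or_ltl (p1 A a) (p1 A b)"
| "p1 A (Next_ltl a) = Next_ltl (p1 A a)"
| "p1 A \<phi> = \<phi>"

fun s1 :: "'a ltl set \<Rightarrow> 'a ltl \<Rightarrow> 'a ltl" where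
  "s1 A (WeakUntil_ltl a b) = (if WeakUntil_ltl a b \<in> A then True_ltl else Until_ltl (s1 A a) (s1 A b))"
| "s1 A (Until_ltl a b) = Until_ltl (s1 A a) (s1 A b)"
| "s1 A (And_ltl a b) = And_ltl (s1 A a) (s1 A b)"
| "s1 A (Or_ltl a b) = Or_ltl (s1 A a) (s1 A b)"
| "s1 A (Next_ltl a) = Next_ltl (s1 A a)"
| "s1 A \<phi> = \<phi>"

fun s2 :: "'a ltl set \<Rightarrow> 'a ltl \<Rightarrow> 'a ltl" where
  "s2 A (WeakUntil_ltl a b) = Until_ltl (s2 A a) (Or_ltl (s2 A b) (WeakUntil_ltl (p1 A a) False_ltl))"
| "s2 A (Until_ltl a b) = Until_ltl (s2 A a) (s2 A b)"
| "s2 A (And_ltl a b) = And_ltl (s2 A a) (s2 A b)"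
| "s2 A (Or_ltl a b) = Or_ltl (s2 A a) (s2 A b)"
| "s2 A (Next_ltl a) = Next_ltl (s2 A a)"
| "s2 A \<phi> = \<phi>"

lemma P1a:
  assumes "lf \<psi>" "\<forall>u\<in>subfs \<psi>. is_U u \<longrightarrow> u \<in> A \<longrightarrow> infw w u"
  shows "sat w i (p1 A \<psi>) \<Longrightarrow> sat w i \<psi>"
  using assms
proof (induction \<psi> arbitrary: i)
  case (Until_ltl a b)
  show ?case
  proof (cases "Until_ltl a b \<in> A")
    case True
    then have inf: "infw w (Until_ltl a b)" using Until_ltl.prems by (simp add: subfs_refl)
    have ha: "\<And>j. sat w j (p1 A a) \<Longrightarrow> sat w j a" using Until_ltl by auto
    have hb: "\<And>j. sat w j (p1 A b) \<Longrightarrow> sat w j b" using Until_ltl by auto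
    from Until_ltl.prems(1) True have "sat w i (WeakUntil_ltl (p1 A a) (p1 A b))" by simp
    then have W: "(\<forall>k\<ge>i. sat w k a) \<or> (\<exists>k\<ge>i. sat w k b \<and> (\<forall>j. i \<le> j \<and> j < k \<longrightarrow> sat w j a))"
      using ha hb by auto
    then show ?thesis
    proof
      assume all: "\<forall>k\<ge>i. sat w k a"
      obtain k where "k \<ge> i" "sat w k (Until_ltl a b)" using inf unfolding infw_def by blast
      then obtain k' where "k' \<ge> k" "sat w k' b" by auto
      then show ?thesis using all \<open>k \<ge> i\<close> by simp (intro exI[of _ k'], auto)
    qed auto
  next
    case False
    then show ?thesis using Until_ltl.prems by simp
  qed
next
  case (WeakUntil_ltl a b)
  have ha: "\<And>j. sat w j (p1 A a) \<Longrightarrow> sat w j a" using WeakUntil_ltl by auto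
  have hb: "\<And>j. sat w j (p1 A b) \<Longrightarrow> sat w j b" using WeakUntil_ltl by auto
  show ?case using WeakUntil_ltl.prems(1) ha hb by auto
qed auto

lemma P1b:
  assumes "lf \<psi>" "\<forall>u\<in>subfs \<psi>. is_U u \<longrightarrow> infw w u \<longrightarrow> u \<in> A"
  shows "\<exists>n. \<forall>i\<ge>n. sat w i \<psi> \<longrightarrow> sat w i (p1 A \<psi>)"
  using assms
proof (induction \<psi>)
  case (Until_ltl a b)
  show ?case
  proof (cases "Until_ltl a b \<in> A")
    case True
    obtain na where na: "\<forall>i\<ge>na. sat w i a \<longrightarrow> sat w i (p1 A a)" using Until_ltl by auto
    obtain nb where nb: "\<forall>i\<ge>nb. sat w i b \<longrightarrow> sat w i (p1 A b)" using Until_ltl by auto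
    show ?thesis
    proof (intro exI[of _ "max na nb"] allI impI)
      fix i assume i: "max na nb \<le> i" and "sat w i (Until_ltl a b)"
      then obtain k where k: "k \<ge> i" "sat w k b" "\<forall>j. i \<le> j \<and> j < k \<longrightarrow> sat w j a" by auto
      then show "sat w i (p1 A (Until_ltl a b))" using True na nb i
        by simp (intro disjI2 exI[of _ k], auto)
    qed
  next
    case False
    then have "\<not> infw w (Until_ltl a b)" using Until_ltl.prems by (auto simp: subfs_refl)
    then obtain m where "\<forall>k\<ge>m. \<not> sat w k (Until_ltl a b)" unfolding infw_def by blast
    then show ?thesis by blast
  qed
next
  case (WeakUntil_ltl a b)
  obtain na where na: "\<forall>i\<ge>na. sat w i a \<longrightarrow> sat w i (p1 A a)" using WeakUntil_ltl by auto
  obtain nb where nb: "\<forall>i\<ge>nb. sat w i b \<longrightarrow> sat w i (p1 A b)" using WeakUntil_ltl by auto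
  show ?case
  proof (intro exI[of _ "max na nb"] allI impI)
    fix i assume i: "max na nb \<le> i" and h: "sat w i (WeakUntil_ltl a b)"
    show "sat w i (p1 A (WeakUntil_ltl a b))"
    proof (cases "\<forall>k\<ge>i. sat w k a")
      case True
      then show ?thesis using na i by auto
    next
      case False
      then obtain k where k: "k \<ge> i" "sat w k b" "\<forall>j. i \<le> j \<and> j < k \<longrightarrow> sat w j a" using h by auto
      then show ?thesis using na nb i
        by simp (intro disjI2 exI[of _ k], auto)
    qed
  qed
next
  case (And_ltl a b)
  obtain na where na: "\<forall>i\<ge>na. sat w i a \<longrightarrow> sat w i (p1 A a)" using And_ltl by auto
  obtain nb where nb: "\<forall>i\<ge>nb. sat w i b \<longrightarrow> sat w i (p1 A b)" using And_ltl by auto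
  show ?case using na nb by (intro exI[of _ "max na nb"]) auto
next
  case (Or_ltl a b)
  obtain na where na: "\<forall>i\<ge>na. sat w i a \<longrightarrow> sat w i (p1 A a)" using Or_ltl by auto
  obtain nb where nb: "\<forall>i\<ge>nb. sat w i b \<longrightarrow> sat w i (p1 A b)" using Or_ltl by auto
  show ?case using na nb by (intro exI[of _ "max na nb"]) auto
next
  case (Next_ltl a)
  obtain na where na: "\<forall>i\<ge>na. sat w i a \<longrightarrow> sat w i (p1 A a)" using Next_ltl by auto
  show ?case using na by (intro exI[of _ na]) auto
qed auto

lemma S1a:
  assumes "lf \<psi>" "\<forall>v\<in>subfs \<psi>. is_W v \<longrightarrow> v \<in> A \<longrightarrow> fg w v"
  shows "\<exists>n. \<forall>i\<ge>n. sat w i (s1 A \<psi>) \<longrightarrow> sat w i \<psi>"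
  using assms
proof (induction \<psi>)
  case (Until_ltl a b)
  obtain na where na: "\<forall>i\<ge>na. sat w i (s1 A a) \<longrightarrow> sat w i a" using Until_ltl by auto
  obtain nb where nb: "\<forall>i\<ge>nb. sat w i (s1 A b) \<longrightarrow> sat w i b" using Until_ltl by auto
  show ?case
  proof (intro exI[of _ "max na nb"] allI impI)
    fix i assume i: "max na nb \<le> i" and "sat w i (s1 A (Until_ltl a b))"
    then obtain k where k: "k \<ge> i" "sat w k (s1 A b)" "\<forall>j. i \<le> j \<and> j < k \<longrightarrow> sat w j (s1 A a)" by auto
    then show "sat w i (Until_ltl a b)" using na nb i
      by simp (intro exI[of _ k], auto)
  qed
next
  case (WeakUntil_ltl a b)
  show ?case
  proof (cases "WeakUntil_ltl a b \<in> A")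
    case True
    then have "fg w (WeakUntil_ltl a b)" using WeakUntil_ltl.prems by (auto simp: subfs_refl)
    then show ?thesis using True unfolding fg_def by auto
  next
    case False
    obtain na where na: "\<forall>i\<ge>na. sat w i (s1 A a) \<longrightarrow> sat w i a" using WeakUntil_ltl by auto
    obtain nb where nb: "\<forall>i\<ge>nb. sat w i (s1 A b) \<longrightarrow> sat w i b" using WeakUntil_ltl by auto
    show ?thesis
    proof (intro exI[of _ "max na nb"] allI impI)
      fix i assume i: "max na nb \<le> i" and "sat w i (s1 A (WeakUntil_ltl a b))"
      then obtain k where k: "k \<ge> i" "sat w k (s1 A b)" "\<forall>j. i \<le> j \<and> j < k \<longrightarrow> sat w j (s1 A a)" 
        using False by auto
      then show "sat w i (WeakUntil_ltl a b)" using na nb i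
        by simp (intro disjI2 exI[of _ k], auto)
    qed
  qed
next
  case (And_ltl a b)
  obtain na where na: "\<forall>i\<ge>na. sat w i (s1 A a) \<longrightarrow> sat w i a" using And_ltl by auto
  obtain nb where nb: "\<forall>i\<ge>nb. sat w i (s1 A b) \<longrightarrow> sat w i b" using And_ltl by auto
  show ?case using na nb by (intro exI[of _ "max na nb"]) auto
next
  case (Or_ltl a b)
  obtain na where na: "\<forall>i\<ge>na. sat w i (s1 A a) \<longrightarrow> sat w i a" using Or_ltl by auto
  obtain nb where nb: "\<forall>i\<ge>nb. sat w i (s1 A b) \<longrightarrow> sat w i b" using Or_ltl by auto
  show ?case using na nb by (intro exI[of _ "max na nb"]) auto
next
  case (Next_ltl a)
  obtain na where na: "\<forall>i\<ge>na. sat w i (s1 A a) \<longrightarrow> sat w i a" using Next_ltl by auto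
  show ?case using na by (intro exI[of _ na]) auto
qed auto

lemma S1b:
  assumes "lf \<psi>" "\<forall>v\<in>subfs \<psi>. is_W v \<longrightarrow> fg w v \<longrightarrow> v \<in> A"
  shows "\<exists>n. \<forall>i\<ge>n. sat w i \<psi> \<longrightarrow> sat w i (s1 A \<psi>)"
  using assms
proof (induction \<psi>)
  case (Until_ltl a b)
  obtain na where na: "\<forall>i\<ge>na. sat w i a \<longrightarrow> sat w i (s1 A a)" using Until_ltl by auto
  obtain nb where nb: "\<forall>i\<ge>nb. sat w i b \<longrightarrow> sat w i (s1 A b)" using Until_ltl by auto
  show ?case
  proof (intro exI[of _ "max na nb"] allI impI)
    fix i assume i: "max na nb \<le> i" and "sat w i (Until_ltl a b)"
    then obtain k where k: "k \<ge> i" "sat w k b" "\<forall>j. i \<le> j \<and> j < k \<longrightarrow> sat w j a" by auto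
    then show "sat w i (s1 A (Until_ltl a b))" using na nb i
      by simp (intro exI[of _ k], auto)
  qed
next
  case (WeakUntil_ltl a b)
  show ?case
  proof (cases "WeakUntil_ltl a b \<in> A")
    case True
    then show ?thesis by simp
  next
    case False
    then have nfg: "\<not> fg w (WeakUntil_ltl a b)" using WeakUntil_ltl.prems by (auto simp: subfs_refl)
    obtain na where na: "\<forall>i\<ge>na. sat w i a \<longrightarrow> sat w i (s1 A a)" using WeakUntil_ltl by auto
    obtain nb where nb: "\<forall>i\<ge>nb. sat w i b \<longrightarrow> sat w i (s1 A b)" using WeakUntil_ltl by auto
    show ?thesis
    proof (intro exI[of _ "max na nb"] allI impI)
      fix i assume i: "max na nb \<le> i" and h: "sat w i (WeakUntil_ltl a b)"
      have "\<not> (\<forall>k\<ge>i. sat w k a)"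
      proof
        assume all: "\<forall>k\<ge>i. sat w k a"
        then have "\<forall>k\<ge>i. sat w k (WeakUntil_ltl a b)" by auto
        then show False using nfg unfolding fg_def by blast
      qed
      then obtain k where k: "k \<ge> i" "sat w k b" "\<forall>j. i \<le> j \<and> j < k \<longrightarrow> sat w j a" 
        using h by auto
      then show "sat w i (s1 A (WeakUntil_ltl a b))" using na nb i False
        by simp (intro exI[of _ k], auto)
    qed
  qed
next
  case (And_ltl a b)
  obtain na where na: "\<forall>i\<ge>na. sat w i a \<longrightarrow> sat w i (s1 A a)" using And_ltl by auto
  obtain nb where nb: "\<forall>i\<ge>nb. sat w i b \<longrightarrow> sat w i (s1 A b)" using And_ltl by auto
  show ?case using na nb by (intro exI[of _ "max na nb"]) auto
next
  case (Or_ltl a b)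
  obtain na where na: "\<forall>i\<ge>na. sat w i a \<longrightarrow> sat w i (s1 A a)" using Or_ltl by auto
  obtain nb where nb: "\<forall>i\<ge>nb. sat w i b \<longrightarrow> sat w i (s1 A b)" using Or_ltl by auto
  show ?case using na nb by (intro exI[of _ "max na nb"]) auto
next
  case (Next_ltl a)
  obtain na where na: "\<forall>i\<ge>na. sat w i a \<longrightarrow> sat w i (s1 A a)" using Next_ltl by auto
  show ?case using na by (intro exI[of _ na]) auto
qed auto

lemma S2a:
  assumes "lf \<psi>" "\<forall>u\<in>subfs \<psi>. is_U u \<longrightarrow> u \<in> A \<longrightarrow> infw w u"
  shows "sat w i (s2 A \<psi>) \<Longrightarrow> sat w i \<psi>"
  using assms
proof (induction \<psi> arbitrary: i)
  case (Until_ltl a b)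
  have ha: "\<And>j. sat w j (s2 A a) \<Longrightarrow> sat w j a" using Until_ltl by auto
  have hb: "\<And>j. sat w j (s2 A b) \<Longrightarrow> sat w j b" using Until_ltl by auto
  show ?case using Until_ltl.prems(1) ha hb by auto
next
  case (WeakUntil_ltl a b)
  have ha: "\<And>j. sat w j (s2 A a) \<Longrightarrow> sat w j a" using WeakUntil_ltl by auto
  have hb: "\<And>j. sat w j (s2 A b) \<Longrightarrow> sat w j b" using WeakUntil_ltl by auto
  have hp: "\<And>j. sat w j (p1 A a) \<Longrightarrow> sat w j a" 
    using P1a[of a A w] WeakUntil_ltl.prems by auto
  from WeakUntil_ltl.prems(1) obtain k where k: "k \<ge> i" 
    "sat w k (s2 A b) \<or> (\<forall>k'\<ge>k. sat w k' (p1 A a))" "\<forall>j. i \<le> j \<and> j < k \<longrightarrow> sat w j (s2 A a)"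
    by auto
  from k(2) show ?case
  proof
    assume "sat w k (s2 A b)"
    then show ?thesis using k ha hb by auto
  next
    assume "\<forall>k'\<ge>k. sat w k' (p1 A a)"
    then have "\<forall>k'\<ge>i. sat w k' a" using k ha hp by (meson not_le)
    then show ?thesis by simp
  qed
qed auto

lemma S2b:
  assumes "lf \<psi>" "\<forall>u\<in>subfs \<psi>. is_U u \<longrightarrow> infw w u \<longrightarrow> u \<in> A"
  shows "sat w i \<psi> \<Longrightarrow> sat w i (s2 A \<psi>)"
  using assms
proof (induction \<psi> arbitrary: i)
  case (Until_ltl a b)
  have ha: "\<And>j. sat w j a \<Longrightarrow> sat w j (s2 A a)" using Until_ltl by auto
  have hb: "\<And>j. sat w j b \<Longrightarrow> sat w j (s2 A b)" using Until_ltl by auto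
  show ?case using Until_ltl.prems(1) ha hb by auto
next
  case (WeakUntil_ltl a b)
  have ha: "\<And>j. sat w j a \<Longrightarrow> sat w j (s2 A a)" using WeakUntil_ltl by auto
  have hb: "\<And>j. sat w j b \<Longrightarrow> sat w j (s2 A b)" using WeakUntil_ltl by auto
  obtain n where n: "\<forall>j\<ge>n. sat w j a \<longrightarrow> sat w j (p1 A a)"
    using P1b[of a w A] WeakUntil_ltl.prems by auto
  show ?case
  proof (cases "\<forall>k\<ge>i. sat w k a")
    case True
    then show ?thesis using n ha
      by simp (intro exI[of _ "max i n"], auto)
  next
    case False
    then obtain k where k: "k \<ge> i" "sat w k b" "\<forall>j. i \<le> j \<and> j < k \<longrightarrow> sat w j a" 
      using WeakUntil_ltl.prems(1) by auto
    then show ?thesis using ha hb by simp (intro exI[of _ k], auto)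
  qed
qed auto



fun tsubs :: "'a ltl \<Rightarrow> 'a ltl list" where
  "tsubs (Until_ltl a b) = Until_ltl a b # tsubs a @ tsubs b"
| "tsubs (WeakUntil_ltl a b) = WeakUntil_ltl a b # tsubs a @ tsubs b"
| "tsubs (And_ltl a b) = tsubs a @ tsubs b"
| "tsubs (Or_ltl a b) = tsubs a @ tsubs b"
| "tsubs (Next_ltl a) = tsubs a"
| "tsubs (GF_ltl a) = tsubs a"
| "tsubs (FG_ltl a) = tsubs a"
| "tsubs _ = []"

lemma mem_tsubs: "x \<in> set (tsubs \<phi>) \<longleftrightarrow> x \<in> subfs \<phi> \<and> (is_U x \<or> is_W x)"
  by (induction \<phi>) auto

lemma set_tsubs: "set (tsubs \<phi>) = {x \<in> subfs \<phi>. is_U x \<or> is_W x}"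
  using mem_tsubs by blast

lemma length_tsubs: "length (tsubs \<phi>) \<le> fsize \<phi>"
  by (induction \<phi>) auto

lemma UW_excl: "is_U x \<Longrightarrow> \<not> is_W x"
  by (cases x) auto

definition Dsem :: "'a word \<Rightarrow> 'a ltl \<Rightarrow> 'a ltl set \<Rightarrow> bool" where
  "Dsem w \<phi> A = (sat w 0 (s2 A \<phi>) \<and>
     (\<forall>x\<in>A. (is_U x \<longrightarrow> infw w (s1 A x)) \<and> (is_W x \<longrightarrow> fg w (p1 A x))))"

lemma main_equiv:
  assumes "lf \<phi>"
  shows "sat w 0 \<phi> \<longleftrightarrow> (\<exists>A \<subseteq> set (tsubs \<phi>). Dsem w \<phi> A)"
proof
  assume h: "sat w 0 \<phi>"
  define A where "A = {x \<in> set (tsubs \<phi>). (is_U x \<and> infw w x) \<or> (is_W x \<and> fg w x)}"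
  have "A \<subseteq> set (tsubs \<phi>)" unfolding A_def by auto
  moreover have "sat w 0 (s2 A \<phi>)"
    using S2b[of \<phi> w A 0] assms h unfolding A_def set_tsubs by auto
  moreover have "\<forall>x\<in>A. (is_U x \<longrightarrow> infw w (s1 A x)) \<and> (is_W x \<longrightarrow> fg w (p1 A x))"
  proof (intro ballI conjI impI)
    fix x assume x: "x \<in> A"
    then have xs: "x \<in> subfs \<phi>" unfolding A_def set_tsubs by auto
    then have lx: "lf x" using assms subfs_lf by blast
    {
      assume "is_U x"
      then have ix: "infw w x" using x UW_excl unfolding A_def by auto
      have "\<forall>v\<in>subfs x. is_W v \<longrightarrow> fg w v \<longrightarrow> v \<in> A"
        using xs subfs_trans unfolding A_def set_tsubs by blast
      then obtain n where n: "\<forall>i\<ge>n. sat w i x \<longrightarrow> sat w i (s1 A x)" using S1b[OF lx] by blast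
      show "infw w (s1 A x)" unfolding infw_def
      proof
        fix m obtain k where "k \<ge> max m n" "sat w k x" using ix unfolding infw_def by blast
        then show "\<exists>k\<ge>m. sat w k (s1 A x)" using n by auto
      qed
    }
    {
      assume "is_W x"
      then have fx: "fg w x" using x UW_excl unfolding A_def by auto
      have "\<forall>u\<in>subfs x. is_U u \<longrightarrow> infw w u \<longrightarrow> u \<in> A"
        using xs subfs_trans unfolding A_def set_tsubs by blast
      then obtain n where n: "\<forall>i\<ge>n. sat w i x \<longrightarrow> sat w i (p1 A x)" using P1b[OF lx] by blast
      obtain n' where n': "\<forall>k\<ge>n'. sat w k x" using fx unfolding fg_def by blast
      show "fg w (p1 A x)" unfolding fg_def using n n' by (intro exI[of _ "max n n'"]) auto
    }
  qed
  ultimately show "\<exists>A \<subseteq> set (tsubs \<phi>). Dsem w \<phi> A" unfolding Dsem_def by blast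
next
  assume "\<exists>A \<subseteq> set (tsubs \<phi>). Dsem w \<phi> A"
  then obtain A where A: "A \<subseteq> set (tsubs \<phi>)" "Dsem w \<phi> A" by blast
  have claim: "x \<in> A \<Longrightarrow> (is_U x \<longrightarrow> infw w x) \<and> (is_W x \<longrightarrow> fg w x)" for x
  proof (induction x rule: measure_induct_rule[where f=fsize])
    case (less x)
    then have xs: "x \<in> subfs \<phi>" using A(1) unfolding set_tsubs by auto
    then have lx: "lf x" using assms subfs_lf by blast
    show ?case
    proof (intro conjI impI)
      assume U: "is_U x"
      have i1: "infw w (s1 A x)" using A(2) less.prems U unfolding Dsem_def by auto
      have "\<forall>v\<in>subfs x. is_W v \<longrightarrow> v \<in> A \<longrightarrow> fg w v"
      proof (intro ballI impI)
        fix v assume v: "v \<in> subfs x" "is_W v" "v \<in> A"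
        then have "v \<noteq> x" using U UW_excl by blast
        then have "fsize v < fsize x" using subfs_size v(1) by blast
        then show "fg w v" using less.IH v by blast
      qed
      then obtain n where n: "\<forall>i\<ge>n. sat w i (s1 A x) \<longrightarrow> sat w i x" using S1a[OF lx] by blast
      show "infw w x" unfolding infw_def
      proof
        fix m obtain k where "k \<ge> max m n" "sat w k (s1 A x)" using i1 unfolding infw_def by blast
        then show "\<exists>k\<ge>m. sat w k x" using n by auto
      qed
    next
      assume W: "is_W x"
      have f1: "fg w (p1 A x)" using A(2) less.prems W unfolding Dsem_def by auto
      have "\<forall>u\<in>subfs x. is_U u \<longrightarrow> u \<in> A \<longrightarrow> infw w u"
      proof (intro ballI impI)
        fix u assume u: "u \<in> subfs x" "is_U u" "u \<in> A"
        then have "u \<noteq> x" using W UW_excl by blast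
        then have "fsize u < fsize x" using subfs_size u(1) by blast
        then show "infw w u" using less.IH u by blast
      qed
      then have "\<And>i. sat w i (p1 A x) \<Longrightarrow> sat w i x" using P1a[OF lx] by blast
      then show "fg w x" using f1 unfolding fg_def by blast
    qed
  qed
  have "\<forall>u\<in>subfs \<phi>. is_U u \<longrightarrow> u \<in> A \<longrightarrow> infw w u" using claim by blast
  then show "sat w 0 \<phi>" using S2a[OF assms] A(2) unfolding Dsem_def by blast
qed

fun conjs :: "'a ltl set \<Rightarrow> 'a ltl list \<Rightarrow> 'a ltl" where
  "conjs A [] = True_ltl"
| "conjs A (x # xs) = (if is_U x then And_ltl (GF_ltl (s1 A x)) (conjs A xs)
     else if is_W x then And_ltl (FG_ltl (p1 A x)) (conjs A xs) else conjs A xs)"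

lemma sat_conjs: "sat w i (conjs A xs) \<longleftrightarrow>
   (\<forall>x\<in>set xs. (is_U x \<longrightarrow> infw w (s1 A x)) \<and> (is_W x \<longrightarrow> fg w (p1 A x)))"
  by (induction xs) (auto dest: UW_excl)

definition D :: "'a ltl \<Rightarrow> 'a ltl list \<Rightarrow> 'a ltl" where
  "D \<phi> S = And_ltl (s2 (set S) \<phi>) (conjs (set S) S)"

fun build :: "'a ltl \<Rightarrow> 'a ltl list \<Rightarrow> 'a ltl list \<Rightarrow> 'a ltl" where
  "build \<phi> [] S = D \<phi> S"
| "build \<phi> (x # L) S = Or_ltl (build \<phi> L (x # S)) (build \<phi> L S)"

lemma sat_D: "sat w 0 (D \<phi> S) = Dsem w \<phi> (set S)"
  unfolding D_def Dsem_def by (simp add: sat_conjs)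

lemma sat_build: "sat w 0 (build \<phi> L S) \<longleftrightarrow> (\<exists>T \<subseteq> set L. Dsem w \<phi> (T \<union> set S))"
proof (induction L arbitrary: S)
  case Nil
  then show ?case by (simp add: sat_D)
next
  case (Cons x L)
  have "sat w 0 (build \<phi> (x # L) S) \<longleftrightarrow>
     (\<exists>T \<subseteq> set L. Dsem w \<phi> (T \<union> insert x (set S))) \<or> (\<exists>T \<subseteq> set L. Dsem w \<phi> (T \<union> set S))"
    using Cons by simp
  also have "\<dots> \<longleftrightarrow> (\<exists>T \<subseteq> set (x # L). Dsem w \<phi> (T \<union> set S))"
  proof
    assume "(\<exists>T \<subseteq> set L. Dsem w \<phi> (T \<union> insert x (set S))) \<or> (\<exists>T \<subseteq> set L. Dsem w \<phi> (T \<union> set S))"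
    then show "\<exists>T \<subseteq> set (x # L). Dsem w \<phi> (T \<union> set S)"
    proof
      assume "\<exists>T \<subseteq> set L. Dsem w \<phi> (T \<union> insert x (set S))"
      then obtain T where "T \<subseteq> set L" "Dsem w \<phi> (T \<union> insert x (set S))" by blast
      then show ?thesis by (intro exI[of _ "insert x T"]) auto
    next
      assume "\<exists>T \<subseteq> set L. Dsem w \<phi> (T \<union> set S)"
      then show ?thesis by auto
    qed
  next
    assume "\<exists>T \<subseteq> set (x # L). Dsem w \<phi> (T \<union> set S)"
    then obtain T where T: "T \<subseteq> set (x # L)" "Dsem w \<phi> (T \<union> set S)" by blast
    show "(\<exists>T \<subseteq> set L. Dsem w \<phi> (T \<union> insert x (set S))) \<or> (\<exists>T \<subseteq> set L. Dsem w \<phi> (T \<union> set S))"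
    proof (cases "x \<in> T")
      case True
      then have "T - {x} \<union> insert x (set S) = T \<union> set S" by auto
      then show ?thesis using T by (intro disjI1 exI[of _ "T - {x}"]) auto
    next
      case False
      then show ?thesis using T by (intro disjI2 exI[of _ T]) auto
    qed
  qed
  finally show ?case .
qed



lemma fsize_p1: "fsize (p1 A \<psi>) \<le> fsize \<psi>"
  by (induction \<psi>) auto

lemma fsize_s1: "fsize (s1 A \<psi>) \<le> fsize \<psi>"
  by (induction \<psi>) auto

lemma fsize_s2: "fsize (s2 A \<psi>) \<le> fsize \<psi> * fsize \<psi>"
proof (induction \<psi>)
  case (WeakUntil_ltl a b)
  have p: "fsize (p1 A a) \<le> fsize a" by (rule fsize_p1)
  have a1: "fsize a \<ge> 1" "fsize b \<ge> 1" using fsize_pos[of a] fsize_pos[of b] by auto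
  have "fsize (s2 A (WeakUntil_ltl a b)) \<le> fsize a * fsize a + fsize b * fsize b + fsize a + 4"
    using WeakUntil_ltl p by simp
  also have "\<dots> \<le> (1 + fsize a + fsize b) * (1 + fsize a + fsize b)"
    using a1 by (simp add: algebra_simps)
  finally show ?case by simp
next
  case (Until_ltl a b)
  then show ?case by (simp add: algebra_simps)
next
  case (And_ltl a b)
  then show ?case by (simp add: algebra_simps)
next
  case (Or_ltl a b)
  then show ?case by (simp add: algebra_simps)
next
  case (Next_ltl a)
  then show ?case by (simp add: algebra_simps)
qed auto


lemma fsize_conjs:
  assumes "\<forall>x\<in>set S. fsize x \<le> n"
  shows "fsize (conjs A S) \<le> 1 + length S * (n + 2)"
  using assms
proof (induction S)
  case (Cons x S)
  have "fsize (s1 A x) \<le> n" "fsize (p1 A x) \<le> n"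
    using Cons.prems fsize_s1[of A x] fsize_p1[of A x] by auto
  then show ?case using Cons by auto
qed simp

lemma fsize_build:
  assumes "\<forall>x\<in>set L \<union> set S. fsize x \<le> n" "\<forall>A. fsize (s2 A \<phi>) \<le> Q"
  shows "fsize (build \<phi> L S) + 1 \<le> 2 ^ length L * (3 + Q + (length L + length S) * (n + 2))"
  using assms(1)
proof (induction L arbitrary: S)
  case Nil
  have "fsize (conjs (set S) S) \<le> 1 + length S * (n + 2)"
    using fsize_conjs Nil.prems by auto
  then show ?case using assms(2)[rule_format, of "set S"] by (simp add: D_def)
next
  case (Cons x L)
  have h1: "fsize (build \<phi> L (x # S)) + 1 \<le> 2 ^ length L * (3 + Q + (length L + length (x # S)) * (n + 2))"
    using Cons.IH[of "x # S"] Cons.prems by auto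
  have h2: "fsize (build \<phi> L S) + 1 \<le> 2 ^ length L * (3 + Q + (length L + length S) * (n + 2))"
    using Cons.IH[of S] Cons.prems by auto
  also have "\<dots> \<le> 2 ^ length L * (3 + Q + (length L + length (x # S)) * (n + 2))"
    by (intro mult_le_mono2) auto
  finally have h2': "fsize (build \<phi> L S) + 1 \<le> 2 ^ length L * (3 + Q + (length L + length (x # S)) * (n + 2))" .
  have "fsize (build \<phi> (x # L) S) + 1 = (fsize (build \<phi> L (x # S)) + 1) + (fsize (build \<phi> L S) + 1)"
    by simp
  also have "\<dots> \<le> 2 * (2 ^ length L * (3 + Q + (length L + length (x # S)) * (n + 2)))"
    using h1 h2' by linarith
  finally show ?case by simp
qed

lemma atoms_p1: "atoms (p1 A \<psi>) \<subseteq> atoms \<psi>"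
  by (induction \<psi>) auto

lemma atoms_s1: "atoms (s1 A \<psi>) \<subseteq> atoms \<psi>"
  by (induction \<psi>) auto

lemma atoms_s2: "atoms (s2 A \<psi>) \<subseteq> atoms \<psi>"
proof (induction \<psi>)
  case (WeakUntil_ltl a b)
  then show ?case using atoms_p1[of A a] by auto
qed auto

lemma atoms_conjs: "\<forall>x\<in>set S. atoms x \<subseteq> X \<Longrightarrow> atoms (conjs A S) \<subseteq> X"
proof (induction S)
  case (Cons x S)
  then show ?case using atoms_p1[of A x] atoms_s1[of A x] by auto
qed simp

lemma atoms_build: "\<forall>x\<in>set L \<union> set S. atoms x \<subseteq> atoms \<phi> \<Longrightarrow> atoms (build \<phi> L S) \<subseteq> atoms \<phi>"
proof (induction L arbitrary: S)
  case Nil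
  then show ?case using atoms_s2[of "set S" \<phi>] atoms_conjs[of S "atoms \<phi>"] by (auto simp: D_def)
next
  case (Cons x L)
  have "atoms (build \<phi> L (x # S)) \<subseteq> atoms \<phi>" using Cons.IH[of "x # S"] Cons.prems by auto
  moreover have "atoms (build \<phi> L S) \<subseteq> atoms \<phi>" using Cons.IH[of S] Cons.prems by auto
  ultimately show ?case by simp
qed



fun sig1 :: "'a ltl \<Rightarrow> bool" where
  "sig1 (And_ltl a b) = (sig1 a \<and> sig1 b)"
| "sig1 (Or_ltl a b) = (sig1 a \<and> sig1 b)"
| "sig1 (Until_ltl a b) = (sig1 a \<and> sig1 b)"
| "sig1 (Next_ltl a) = sig1 a"
| "sig1 (WeakUntil_ltl a b) = False"
| "sig1 (GF_ltl a) = False"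
| "sig1 (FG_ltl a) = False"
| "sig1 _ = True"

fun pi1 :: "'a ltl \<Rightarrow> bool" where
  "pi1 (And_ltl a b) = (pi1 a \<and> pi1 b)"
| "pi1 (Or_ltl a b) = (pi1 a \<and> pi1 b)"
| "pi1 (WeakUntil_ltl a b) = (pi1 a \<and> pi1 b)"
| "pi1 (Next_ltl a) = pi1 a"
| "pi1 (Until_ltl a b) = False"
| "pi1 (GF_ltl a) = False"
| "pi1 (FG_ltl a) = False"
| "pi1 _ = True"

fun sig2 :: "'a ltl \<Rightarrow> bool" where
  "sig2 (And_ltl a b) = (sig2 a \<and> sig2 b)"
| "sig2 (Or_ltl a b) = (sig2 a \<and> sig2 b)"
| "sig2 (Until_ltl a b) = (sig2 a \<and> sig2 b)"
| "sig2 (Next_ltl a) = sig2 a"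
| "sig2 (WeakUntil_ltl a b) = (pi1 a \<and> pi1 b)"
| "sig2 (GF_ltl a) = False"
| "sig2 (FG_ltl a) = False"
| "sig2 _ = True"

fun nfm :: "'a ltl \<Rightarrow> bool" where
  "nfm (And_ltl a b) = (nfm a \<and> nfm b)"
| "nfm (Or_ltl a b) = (nfm a \<and> nfm b)"
| "nfm (GF_ltl a) = sig1 a"
| "nfm (FG_ltl a) = pi1 a"
| "nfm \<phi> = sig2 \<phi>"

lemma sig1_sig2: "sig1 \<phi> \<Longrightarrow> sig2 \<phi>"
  by (induction \<phi>) auto

lemma pi1_sig2: "pi1 \<phi> \<Longrightarrow> sig2 \<phi>"
  by (induction \<phi>) auto

lemma sig2_nfm: "sig2 \<phi> \<Longrightarrow> nfm \<phi>"
  by (induction \<phi>) auto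

lemma sig1_closed: "sig1 \<phi> \<Longrightarrow> \<chi> \<in> subfs \<phi> \<Longrightarrow> sig1 \<chi>"
  by (induction \<phi>) auto

lemma pi1_closed: "pi1 \<phi> \<Longrightarrow> \<chi> \<in> subfs \<phi> \<Longrightarrow> pi1 \<chi>"
  by (induction \<phi>) auto

lemma sig2_closed: "sig2 \<phi> \<Longrightarrow> \<chi> \<in> subfs \<phi> \<Longrightarrow> sig2 \<chi>"
  by (induction \<phi>) (auto dest: pi1_closed intro: pi1_sig2)

lemma nfm_closed: "nfm \<phi> \<Longrightarrow> \<chi> \<in> subfs \<phi> \<Longrightarrow> nfm \<chi>"
proof (induction \<phi>)
  case (GF_ltl a)
  then show ?case by (auto dest: sig1_closed intro: sig2_nfm sig1_sig2)
next
  case (FG_ltl a)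
  then show ?case by (auto dest: pi1_closed intro: sig2_nfm pi1_sig2)
next
  case (WeakUntil_ltl a b)
  then have "sig2 (WeakUntil_ltl a b)" by simp
  then show ?case using sig2_closed sig2_nfm WeakUntil_ltl.prems(2) by blast
next
  case (Until_ltl a b)
  then have "sig2 (Until_ltl a b)" by simp
  then show ?case using sig2_closed sig2_nfm Until_ltl.prems(2) by blast
next
  case (Next_ltl a)
  then have "sig2 (Next_ltl a)" by simp
  then show ?case using sig2_closed sig2_nfm Next_ltl.prems(2) by blast
qed auto

lemma sig1_props: "sig1 \<chi> \<Longrightarrow> \<not> is_W \<chi> \<and> \<not> is_limit \<chi>"
  by (cases \<chi>) (auto simp: is_limit_def)

lemma pi1_props: "pi1 \<chi> \<Longrightarrow> \<not> is_U \<chi> \<and> \<not> is_limit \<chi>"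
  by (cases \<chi>) (auto simp: is_limit_def)

lemma sig2_props: "sig2 \<chi> \<Longrightarrow> \<not> is_limit \<chi>"
  by (cases \<chi>) (auto simp: is_limit_def)

lemma node_props:
  assumes "nfm \<psi>" "\<chi> \<in> proper_subfs \<psi>"
  shows "(is_temporal \<psi> \<longrightarrow> \<not> is_limit \<chi>) \<and> (is_W \<psi> \<longrightarrow> \<not> is_U \<chi>)
     \<and> (is_GF \<psi> \<longrightarrow> \<not> is_W \<chi>) \<and> (is_FG \<psi> \<longrightarrow> \<not> is_U \<chi>)"
  using assms
proof (cases \<psi>)
  case (Next_ltl a)
  then have "sig2 \<chi>" using assms by (auto simp: proper_subfs_def dest: sig2_closed)
  then show ?thesis using Next_ltl sig2_props by auto
next
  case (Until_ltl a b)
  then have "sig2 \<chi>" using assms by (auto simp: proper_subfs_def dest: sig2_closed)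
  then show ?thesis using Until_ltl sig2_props by auto
next
  case (WeakUntil_ltl a b)
  then have "pi1 \<chi>" using assms by (auto simp: proper_subfs_def dest: pi1_closed)
  then show ?thesis using WeakUntil_ltl pi1_props by auto
next
  case (GF_ltl a)
  then have "sig1 \<chi>" using assms by (auto simp: proper_subfs_def dest: sig1_closed)
  then show ?thesis using GF_ltl sig1_props by auto
next
  case (FG_ltl a)
  then have "pi1 \<chi>" using assms by (auto simp: proper_subfs_def dest: pi1_closed)
  then show ?thesis using FG_ltl pi1_props by auto
qed (auto simp: is_temporal_def)

lemma nfm_normal_form:
  assumes "nfm \<phi>" shows "normal_form \<phi>"
proof -
  have "\<And>\<psi> \<chi>. \<psi> \<in> subfs \<phi> \<Longrightarrow> \<chi> \<in> proper_subfs \<psi> \<Longrightarrow>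
    (is_temporal \<psi> \<longrightarrow> \<not> is_limit \<chi>) \<and> (is_W \<psi> \<longrightarrow> \<not> is_U \<chi>)
     \<and> (is_GF \<psi> \<longrightarrow> \<not> is_W \<chi>) \<and> (is_FG \<psi> \<longrightarrow> \<not> is_U \<chi>)"
    using node_props nfm_closed assms by blast
  then show ?thesis unfolding normal_form_def under_def by blast
qed

lemma pi1_p1: "lf \<psi> \<Longrightarrow> pi1 (p1 A \<psi>)"
  by (induction \<psi>) auto

lemma sig1_s1: "lf \<psi> \<Longrightarrow> sig1 (s1 A \<psi>)"
  by (induction \<psi>) auto

lemma sig2_s2: "lf \<psi> \<Longrightarrow> sig2 (s2 A \<psi>)"
  by (induction \<psi>) (auto simp: pi1_p1)

lemma nfm_conjs: "\<forall>x\<in>set S. lf x \<Longrightarrow> nfm (conjs A S)"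
  by (induction S) (auto simp: pi1_p1 sig1_s1)

lemma nfm_build: "lf \<phi> \<Longrightarrow> \<forall>x\<in>set L \<union> set S. lf x \<Longrightarrow> nfm (build \<phi> L S)"
proof (induction L arbitrary: S)
  case Nil
  then show ?case by (auto simp: D_def sig2_s2 sig2_nfm nfm_conjs)
next
  case (Cons x L)
  have "nfm (build \<phi> L (x # S))" using Cons.IH[of "x # S"] Cons.prems by auto
  moreover have "nfm (build \<phi> L S)" using Cons.IH[of S] Cons.prems by auto
  ultimately show ?case by simp
qed



lemma arith_bound:
  fixes m n :: nat
  assumes "m \<ge> 1" "n \<le> 4 * m"
  shows "2 ^ n * (3 + n * n + n * (n + 2)) \<le> 4 ^ (7 * m)"
proof -
  have e1: "(2::nat) ^ n \<le> 16 ^ m"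
  proof -
    have "(2::nat) ^ n \<le> 2 ^ (4 * m)" using assms(2) by (intro power_increasing) auto
    also have "\<dots> = 16 ^ m" by (simp add: power_mult)
    finally show ?thesis .
  qed
  have "n * n \<le> (4*m) * (4*m)" using assms(2) by (intro mult_le_mono) auto
  moreover have "n * (n + 2) \<le> (4*m) * (4*m + 2)" using assms(2) by (intro mult_le_mono) auto
  ultimately have "3 + n * n + n * (n + 2) \<le> 3 + 32 * (m * m) + 8 * m" by (simp add: algebra_simps)
  also have "\<dots> \<le> 43 * (m * m)"
  proof -
    have "m \<le> m * m" using assms(1) by simp
    moreover have "1 \<le> m * m" using assms(1) by simp
    ultimately show ?thesis by linarith
  qed
  also have "\<dots> \<le> 43 * 4 ^ m"
  proof -
    have "m < 2 ^ m" by (rule less_exp)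
    then have "m * m \<le> 2 ^ m * 2 ^ m" by (intro mult_le_mono) auto
    also have "\<dots> = 4 ^ m" by (simp add: power_mult_distrib[symmetric])
    finally show ?thesis by simp
  qed
  also have "\<dots> \<le> 256 ^ m * 4 ^ m"
  proof -
    have "(256::nat) ^ 1 \<le> 256 ^ m" using assms(1) by (intro power_increasing) auto
    then show ?thesis by simp
  qed
  finally have e2: "3 + n * n + n * (n + 2) \<le> 256 ^ m * 4 ^ m" .
  have "2 ^ n * (3 + n * n + n * (n + 2)) \<le> 16 ^ m * (256 ^ m * 4 ^ m)"
    using e1 e2 by (intro mult_le_mono) auto
  also have "\<dots> = (16 * 256 * 4) ^ m" by (simp only: power_mult_distrib mult.assoc)
  also have "\<dots> = 4 ^ (7 * m)" by (simp add: power_mult)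
  finally show ?thesis .
qed

theorem theorem3:
  fixes Ap :: "'a set" and \<phi> :: "'a ltl"
  assumes "finite Ap" and "atoms \<phi> \<subseteq> Ap"
  shows "\<exists>\<phi>'. atoms \<phi>' \<subseteq> Ap \<and> normal_form \<phi>' \<and> equiv_ltl Ap \<phi>' \<phi> \<and> fsize \<phi>' \<le> 4 ^ (7 * fsize \<phi>)"
proof -
  define \<phi>0 where "\<phi>0 = lfree \<phi>"
  define L where "L = tsubs \<phi>0"
  define \<phi>' where "\<phi>' = build \<phi>0 L []"
  have lf0: "lf \<phi>0" unfolding \<phi>0_def by (rule lf_lfree)
  have Ls: "\<forall>x\<in>set L. x \<in> subfs \<phi>0" unfolding L_def using mem_tsubs by blast
  have "atoms \<phi>' \<subseteq> atoms \<phi>0"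
    unfolding \<phi>'_def using atoms_build[of L "[]" \<phi>0] Ls subfs_atoms by auto
  then have at: "atoms \<phi>' \<subseteq> Ap" using assms(2) unfolding \<phi>0_def atoms_lfree by auto
  have nf: "normal_form \<phi>'"
    unfolding \<phi>'_def using nfm_build[OF lf0, of L "[]"] Ls subfs_lf lf0 nfm_normal_form by auto
  have eq: "equiv_ltl Ap \<phi>' \<phi>"
    unfolding equiv_ltl_def
  proof (intro allI impI)
    fix w :: "'a word"
    have "models w \<phi>' = sat w 0 \<phi>'" by (simp add: sat_0)
    also have "\<dots> = (\<exists>T \<subseteq> set L. Dsem w \<phi>0 T)" unfolding \<phi>'_def by (simp add: sat_build)
    also have "\<dots> = sat w 0 \<phi>0" unfolding L_def using main_equiv[OF lf0] by simp
    also have "\<dots> = models w \<phi>" unfolding \<phi>0_def by (simp add: sat_lfree sat_0)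
    finally show "models w \<phi>' = models w \<phi>" .
  qed
  define n where "n = fsize \<phi>0"
  have n4: "n \<le> 4 * fsize \<phi>" unfolding n_def \<phi>0_def by (rule fsize_lfree)
  have Ln: "length L \<le> n" unfolding L_def n_def by (rule length_tsubs)
  have "\<forall>x\<in>set L \<union> set []. fsize x \<le> n"
    using Ls subfs_size unfolding n_def by fastforce
  moreover have "\<forall>A. fsize (s2 A \<phi>0) \<le> n * n" unfolding n_def using fsize_s2 by blast
  ultimately have "fsize \<phi>' + 1 \<le> 2 ^ length L * (3 + n * n + (length L + 0) * (n + 2))"
    unfolding \<phi>'_def using fsize_build[of L "[]" n \<phi>0 "n * n"] by simp
  also have "\<dots> \<le> 2 ^ n * (3 + n * n + n * (n + 2))"
  proof -
    have "length L * (n + 2) \<le> n * (n + 2)" using Ln by (rule mult_le_mono1)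
    moreover have "(2::nat) ^ length L \<le> 2 ^ n" using Ln by (intro power_increasing) auto
    ultimately show ?thesis by (intro mult_le_mono) auto
  qed
  also have "\<dots> \<le> 4 ^ (7 * fsize \<phi>)"
    using arith_bound[of "fsize \<phi>" n] n4 fsize_pos[of \<phi>] by simp
  finally have "fsize \<phi>' \<le> 4 ^ (7 * fsize \<phi>)" by simp
  then show ?thesis using at nf eq by blast
qed

end
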